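(* Suppose the bandwidth is insufficient, i.e. $BW_{max,EUT}\le\sum_{i\in S_{EUT}}\bar F^{-1}_{B_i}(\lambda_i;b^* )$ with $\lambda_i=w^{-1}(r_{EUT}(b^* )/h_i(b^* ))$, and consider bandwidth reallocation: the SP offers the same rate $b^*$ to the same set $S_{EUT}$ and may choose any allocation $(BW'_i)_{i\in S_{EUT}}$, $BW'_i\ge0$, with $\sum_i BW'_i=BW_{max,EUT}$, and any price $r'$. For such an allocation let $L(BW'):=\max_{i\in S_{EUT}}\{r_{EUT}(b^* )-h_i(b^* )w(\bar F_{B_i}(b^*;BW'_i))\}$. Then (i) $\inf_{BW'}L(BW')\le L(BW_{EUT})=L_{RRM}$, so allowing reallocation does not increase the minimal revenue loss compared with the strict constraints; and (ii) for every admissible allocation $BW'$, $L(BW')\ge0$; equivalently, there is no admissible allocation and price $r'\ge r_{EUT}(b^* )$ at which all users in $S_{EUT}$ accept under prospect theory. In particular the EUT revenue cannot be fully recovered by bandwidth reallocation.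
   Context: A service provider (SP) serves a finite set $S_{EUT}$ of end-users. For each user $i$ there is a benefit function $h_i:(0,\infty)\to(0,\infty)$ and, for each rate $b>0$, a service-guarantee function $BW\mapsto\bar F_{B_i}(b;BW)$ from $[0,\infty)$ to $[0,1)$, continuous and strictly increasing with $\bar F_{B_i}(b;0)=0$. The EUT pricing function is $r_{EUT}:(0,\infty)\to(0,\infty)$. A probability weighting function $w:[0,1]\to[0,1]$ is a continuous strictly increasing bijection (e.g. Prelec's $w(p)=\exp(-(-\ln p)^\alpha)$, $\alpha\in(0,1]$). A user offered rate $b$ at price $r$ with bandwidth $BW_i$ accepts under EUT iff $h_i(b)\bar F_{B_i}(b;BW_i)>r$, and under prospect theory (PT) iff $h_i(b)\,w(\bar F_{B_i}(b;BW_i))>r$. Notation: for $q\ge0$, $\bar F^{-1}_{B_i}(q;b)$ is the unique $BW\ge0$ with $\bar F_{B_i}(b;BW)=q$ if $q$ lies in the range of $\bar F_{B_i}(b;\cdot)$ and $+\infty$ otherwise; $w^{-1}(x):=+\infty$ for $x>1$ and $\bar F^{-1}_{B_i}(+\infty;b):=+\infty$. EUT equilibrium data: a rate $b^*=b^*_{1,EUT}>0$ and bandwidths $BW_{EUT}=(BW_{i,EUT})_{i\in S_{EUT}}$, $BW_{i,EUT}\ge0$, with $\sum_{i}BW_{i,EUT}=BW_{max,EUT}$, such that every $i\in S_{EUT}$ accepts under EUT the offer of rate $b^*$ at price $r_{EUT}(b^* )$ with bandwidth $BW_{i,EUT}$. $L_{RRM}:=\max_{i\in S_{EUT}}\{r_{EUT}(b^*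 )-h_i(b^* )w(\bar F_{B_i}(b^*;BW_{i,EUT}))\}$. *)

theory Defs
  imports "HOL-Analysis.Analysis" "HOL-Library.Extended_Real"
begin

text \<open>Inverse of the probability weighting function, extended by +infinity
  outside [0,1] (the paper sets it to +infinity for x > 1; arguments used are positive).\<close>
definition winv :: "(real \<Rightarrow> real) \<Rightarrow> real \<Rightarrow> ereal" where
  "winv w x = (if x \<in> {0..1} then ereal (the_inv_into {0..1} w x) else \<infinity>)"

text \<open>Inverse service guarantee: Finv F q is the unique BW \<ge> 0 with F BW = q
  if q lies in the range of F on [0,\<infinity>), and +infinity otherwise
  (in particular Finv F \<infinity> = \<infinity>).  Here F = Fbar i b.\<close>
definition Finv :: "(real \<Rightarrow> real) \<Rightarrow> ereal \<Rightarrow> ereal" where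
  "Finv F q = (if \<exists>BW\<ge>0. ereal (F BW) = q
               then ereal (THE BW. BW \<ge> 0 \<and> ereal (F BW) = q) else \<infinity>)"

definition LossPT :: "'a set \<Rightarrow> ('a \<Rightarrow> real \<Rightarrow> real) \<Rightarrow> (real \<Rightarrow> real)
    \<Rightarrow> ('a \<Rightarrow> real \<Rightarrow> real \<Rightarrow> real) \<Rightarrow> real \<Rightarrow> real \<Rightarrow> ('a \<Rightarrow> real) \<Rightarrow> real" where
  "LossPT S h w Fbar r b BW = Max ((\<lambda>i. r - h i b * w (Fbar i b (BW i))) ` S)"

definition admissible :: "'a set \<Rightarrow> real \<Rightarrow> ('a \<Rightarrow> real) \<Rightarrow> bool" where
  "admissible S BWmax BW \<longleftrightarrow> (\<forall>i\<in>S. BW i \<ge> 0) \<and> (\<Sum>i\<in>S. BW i) = BWmax"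

end

theory Submission
  imports Defs
begin

lemma key_i:
  fixes F w :: "real \<Rightarrow> real" and hh r x :: real
  assumes Fc: "continuous_on {0..} F" and Fm: "strict_mono_on {0..} F"
    and F0: "F 0 = 0" and Fr: "\<forall>BW\<ge>0. F BW \<in> {0..<1}"
    and wm: "strict_mono_on {0..1} w" and wb: "bij_betw w {0..1} {0..1}"
    and hp: "hh > 0" and rp: "r > 0" and x0: "x \<ge> 0"
    and gt: "hh * w (F x) > r"
  shows "\<exists>c. Finv F (winv w (r / hh)) = ereal c \<and> c < x"
proof -
  define y where "y = r / hh"
  have "F x \<in> {0..<1}" using Fr x0 by blast
  hence Fx: "F x \<in> {0..1}" by simp
  have wFx: "w (F x) \<in> {0..1}" using bij_betwE[OF wb] Fx by blast
  have ypos: "y > 0" using rp hp by (simp add: y_def)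
  have "r / hh < w (F x)" using gt hp by (simp add: divide_less_eq mult.commute)
  hence yl: "y < w (F x)" by (simp add: y_def)
  have y1: "y \<in> {0..1}" using wFx ypos yl by simp
  have inj: "inj_on w {0..1}" using wb by (simp add: bij_betw_def)
  have img: "w ` {0..1} = {0..1}" using wb by (simp add: bij_betw_def)
  define l where "l = the_inv_into {0..1} w y"
  have yim: "y \<in> w ` {0..1}" using y1 img by simp
  have l01: "l \<in> {0..1}" unfolding l_def by (rule the_inv_into_into[OF inj yim]) simp
  have wl: "w l = y" unfolding l_def by (rule f_the_inv_into_f[OF inj yim])
  have wi: "winv w y = ereal l" using y1 by (simp add: winv_def l_def)
  have lF: "l < F x"
  proof (rule ccontr)
    assume "\<not> l < F x"
    hence "F x \<le> l" by simp
    hence "w (F x) \<le> w l" by (rule strict_mono_on_leD[OF wm Fx l01])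
    thus False using yl wl by simp
  qed
  have l0: "0 \<le> l" using l01 by simp
  have "\<exists>c. 0 \<le> c \<and> c \<le> x \<and> F c = l"
  proof (rule IVT')
    show "F 0 \<le> l" using F0 l0 by simp
    show "l \<le> F x" using lF by simp
    show "0 \<le> x" by (rule x0)
    show "continuous_on {0..x} F" by (rule continuous_on_subset[OF Fc]) auto
  qed
  then obtain c where c: "0 \<le> c" "c \<le> x" "F c = l" by blast
  have cx: "c < x" using c lF by (cases "c = x") auto
  have injF: "inj_on F {0..}" by (rule strict_mono_on_imp_inj_on[OF Fm])
  have uniq: "d = c" if d: "d \<ge> 0 \<and> ereal (F d) = ereal l" for d
  proof -
    have "F d = F c" using d c by simp
    moreover have "d \<in> {0..}" "c \<in> {0..}" using d c by auto
    ultimately show "d = c" using injF by (simp add: inj_on_eq_iff)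
  qed
  have ex: "\<exists>BW\<ge>0. ereal (F BW) = ereal l" using c by blast
  have "(THE BW. BW \<ge> 0 \<and> ereal (F BW) = ereal l) = c"
    using c by (intro the_equality uniq) simp_all
  hence "Finv F (ereal l) = ereal c" unfolding Finv_def using ex by simp
  thus ?thesis using wi cx unfolding y_def by auto
qed

theorem theorem4:
  fixes S :: "'a set" and h :: "'a \<Rightarrow> real \<Rightarrow> real"
    and Fbar :: "'a \<Rightarrow> real \<Rightarrow> real \<Rightarrow> real"
    and rEUT :: "real \<Rightarrow> real" and w :: "real \<Rightarrow> real"
    and bstar BWmax :: real and BWeut :: "'a \<Rightarrow> real"
  assumes finS: "finite S" and neS: "S \<noteq> {}"
    and h_pos: "\<forall>i\<in>S. \<forall>b>0. h i b > 0"
    and F_cont: "\<forall>i\<in>S. \<forall>b>0. continuous_on {0..} (Fbar i b)"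
    and F_mono: "\<forall>i\<in>S. \<forall>b>0. strict_mono_on {0..} (Fbar i b)"
    and F_zero: "\<forall>i\<in>S. \<forall>b>0. Fbar i b 0 = 0"
    and F_range: "\<forall>i\<in>S. \<forall>b>0. \<forall>BW\<ge>0. Fbar i b BW \<in> {0..<1}"
    and r_pos: "\<forall>b>0. rEUT b > 0"
    and w_cont: "continuous_on {0..1} w"
    and w_mono: "strict_mono_on {0..1} w"
    and w_bij: "bij_betw w {0..1} {0..1}"
    and b_pos: "bstar > 0"
    and BW_nonneg: "\<forall>i\<in>S. BWeut i \<ge> 0"
    and BW_sum: "(\<Sum>i\<in>S. BWeut i) = BWmax"
    and accept: "\<forall>i\<in>S. h i bstar * Fbar i bstar (BWeut i) > rEUT bstar"
    and insufficient: "ereal BWmax \<le>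
          (\<Sum>i\<in>S. Finv (Fbar i bstar) (winv w (rEUT bstar / h i bstar)))"
  shows "Inf {LossPT S h w Fbar (rEUT bstar) bstar BW' | BW'. admissible S BWmax BW'}
           \<le> LossPT S h w Fbar (rEUT bstar) bstar BWeut
       \<and> (\<forall>BW'. admissible S BWmax BW' \<longrightarrow> LossPT S h w Fbar (rEUT bstar) bstar BW' \<ge> 0)
       \<and> \<not> (\<exists>BW' r'. admissible S BWmax BW' \<and> r' \<ge> rEUT bstar
               \<and> (\<forall>i\<in>S. h i bstar * w (Fbar i bstar (BW' i)) > r'))"
proof -
  let ?r = "rEUT bstar"
  have rp: "?r > 0" using r_pos b_pos by auto
  have core: False if adm: "admissible S BWmax B" and all: "\<forall>i\<in>S. h i bstar * w (Fbar i bstar (B i)) > ?r" for B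
  proof -
    have "\<forall>i\<in>S. \<exists>c. Finv (Fbar i bstar) (winv w (?r / h i bstar)) = ereal c \<and> c < B i"
    proof
      fix i assume i: "i \<in> S"
      show "\<exists>c. Finv (Fbar i bstar) (winv w (?r / h i bstar)) = ereal c \<and> c < B i"
        apply (rule key_i)
        using i F_cont F_mono F_zero F_range w_mono w_bij h_pos b_pos rp adm all
        by (auto simp: admissible_def)
    qed
    then obtain c where c: "\<And>i. i \<in> S \<Longrightarrow> Finv (Fbar i bstar) (winv w (?r / h i bstar)) = ereal (c i) \<and> c i < B i"
      by metis
    have "(\<Sum>i\<in>S. Finv (Fbar i bstar) (winv w (?r / h i bstar))) = (\<Sum>i\<in>S. ereal (c i))"
      using c by (intro sum.cong) auto
    also have "\<dots> = ereal (\<Sum>i\<in>S. c i)" by simp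
    finally have "BWmax \<le> (\<Sum>i\<in>S. c i)" using insufficient by simp
    moreover have "(\<Sum>i\<in>S. c i) < (\<Sum>i\<in>S. B i)"
      using sum_strict_mono[OF finS neS] c by blast
    ultimately show False using adm by (simp add: admissible_def)
  qed
  have nonneg: "LossPT S h w Fbar ?r bstar B \<ge> 0" if adm: "admissible S BWmax B" for B
  proof (rule ccontr)
    assume "\<not> LossPT S h w Fbar ?r bstar B \<ge> 0"
    hence "Max ((\<lambda>i. ?r - h i bstar * w (Fbar i bstar (B i))) ` S) < 0"
      by (simp add: LossPT_def)
    hence "\<forall>i\<in>S. h i bstar * w (Fbar i bstar (B i)) > ?r"
      using finS neS by (simp add: Max_less_iff)
    thus False using core adm by blast
  qed
  have admE: "admissible S BWmax BWeut" using BW_nonneg BW_sum by (simp add: admissible_def)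
  have part1: "Inf {LossPT S h w Fbar ?r bstar BW' | BW'. admissible S BWmax BW'}
           \<le> LossPT S h w Fbar ?r bstar BWeut"
  proof (rule cInf_lower)
    show "LossPT S h w Fbar ?r bstar BWeut \<in> {LossPT S h w Fbar ?r bstar BW' | BW'. admissible S BWmax BW'}"
      using admE by auto
    show "bdd_below {LossPT S h w Fbar ?r bstar BW' | BW'. admissible S BWmax BW'}"
      by (rule bdd_belowI[of _ 0]) (auto intro: nonneg)
  qed
  have part3: "\<not> (\<exists>BW' r'. admissible S BWmax BW' \<and> r' \<ge> ?r
               \<and> (\<forall>i\<in>S. h i bstar * w (Fbar i bstar (BW' i)) > r'))"
  proof
    assume "\<exists>BW' r'. admissible S BWmax BW' \<and> r' \<ge> ?r
               \<and> (\<forall>i\<in>S. h i bstar * w (Fbar i bstar (BW' i)) > r')"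
    then obtain B r' where "admissible S BWmax B" "r' \<ge> ?r" "\<forall>i\<in>S. h i bstar * w (Fbar i bstar (B i)) > r'"
      by blast
    hence "\<forall>i\<in>S. h i bstar * w (Fbar i bstar (B i)) > ?r" by fastforce
    thus False using core[of B] \<open>admissible S BWmax B\<close> by simp
  qed
  show ?thesis using part1 part3 nonneg by (intro conjI allI impI) simp_all
qed

end
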